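(* Let $W$ be a finite Weyl group with affine Weyl group $\tilde W=W\ltimes Z$. Let $X$ be a conjugacy class of involutions in $\tilde W$ that contains $(a,\mathbf 0)$ for some involution $a$ of $W$, and let $\hat X$ be the conjugacy class of $a$ in $W$. Suppose that $\mathcal{C}(W,\hat X)$ is connected with diameter $d$, and that there is an integer $k$ such that whenever $(a,\mathbf u)\in X$, there is some $\hat x\in\hat X$ such that $d((a,\mathbf u),(\hat x,\mathbf 0))\le k$ in $\mathcal{C}(\tilde W,X)$. Then $\mathcal{C}(\tilde W,X)$ is connected with diameter at most $d+k$.
   Context: $W$ is a finite Weyl group with root system $\Phi$ in a Euclidean space $V$, and $Z$ is the coroot lattice $L(\Phi^\vee)$ (with $\alpha^\vee=2\alpha/\langle\alpha,\alpha\rangle$) viewed as translations. $\tilde W$ consists of pairs $(a,\mathbf u)$, $a\in W$, $\mathbf u\in Z$, with multiplication $(a,\mathbf u)(b,\mathbf v)=(ab,\mathbf u^b+\mathbf v)$, where $\mathbf u\mapsto\mathbf u^b$ is the (right) linear action of $W$ on $V$. $\mathcal{C}(G,X)$ is the graph on a set $X$ of involutions of $G$ with $x,y$ adjacent iff they commute; $d$ denotes graph distance and the diameter is the maximal distance between vertices. *)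

theory Defs
  imports "HOL-Analysis.Analysis" "HOL-Library.Extended_Nat"
begin

definition refl :: "'v::euclidean_space \<Rightarrow> 'v \<Rightarrow> 'v" where
  "refl \<alpha> v = v - ((2 * (v \<bullet> \<alpha>)) / (\<alpha> \<bullet> \<alpha>)) *\<^sub>R \<alpha>"

definition coroot :: "'v::euclidean_space \<Rightarrow> 'v" where
  "coroot \<alpha> = (2 / (\<alpha> \<bullet> \<alpha>)) *\<^sub>R \<alpha>"

definition root_system :: "'v::euclidean_space set \<Rightarrow> bool" where
  "root_system \<Phi> \<longleftrightarrow>
     finite \<Phi> \<and> 0 \<notin> \<Phi> \<and> span \<Phi> = UNIV \<and>
     (\<forall>\<alpha>\<in>\<Phi>. \<forall>c::real. c *\<^sub>R \<alpha> \<in> \<Phi> \<longleftrightarrow> c = 1 \<or> c = -1) \<and>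
     (\<forall>\<alpha>\<in>\<Phi>. \<forall>\<beta>\<in>\<Phi>. refl \<alpha> \<beta> \<in> \<Phi>) \<and>
     (\<forall>\<alpha>\<in>\<Phi>. \<forall>\<beta>\<in>\<Phi>. (2 * (\<beta> \<bullet> \<alpha>)) / (\<alpha> \<bullet> \<alpha>) \<in> \<int>)"

inductive_set weyl_group :: "'v::euclidean_space set \<Rightarrow> ('v \<Rightarrow> 'v) set" for \<Phi> where
  id: "id \<in> weyl_group \<Phi>"
| step: "s \<in> weyl_group \<Phi> \<Longrightarrow> \<alpha> \<in> \<Phi> \<Longrightarrow> refl \<alpha> \<circ> s \<in> weyl_group \<Phi>"

text \<open>Product in W, written so that the action u \<mapsto> u^b := b u is a right action:
  u^(ab) = (u^a)^b.\<close>
definition wmult :: "('v \<Rightarrow> 'v) \<Rightarrow> ('v \<Rightarrow> 'v) \<Rightarrow> ('v \<Rightarrow> 'v)" where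
  "wmult a b = b \<circ> a"

definition coroot_lattice :: "'v::euclidean_space set \<Rightarrow> 'v set" where
  "coroot_lattice \<Phi> = {v. \<exists>c::'v \<Rightarrow> int. v = (\<Sum>\<alpha>\<in>\<Phi>. of_int (c \<alpha>) *\<^sub>R coroot \<alpha>)}"

definition aff_weyl :: "'v::euclidean_space set \<Rightarrow> (('v \<Rightarrow> 'v) \<times> 'v) set" where
  "aff_weyl \<Phi> = weyl_group \<Phi> \<times> coroot_lattice \<Phi>"

definition amult :: "(('v::euclidean_space \<Rightarrow> 'v) \<times> 'v) \<Rightarrow> (('v \<Rightarrow> 'v) \<times> 'v) \<Rightarrow> (('v \<Rightarrow> 'v) \<times> 'v)" where
  "amult x y = (wmult (fst x) (fst y), fst y (snd x) + snd y)"

definition involution :: "'g set \<Rightarrow> ('g \<Rightarrow> 'g \<Rightarrow> 'g) \<Rightarrow> 'g \<Rightarrow> 'g \<Rightarrow> bool" where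
  "involution G m e x \<longleftrightarrow> x \<in> G \<and> x \<noteq> e \<and> m x x = e"

text \<open>Conjugacy class of x in G: all g^-1 x g, i.e. y with g y = x g.\<close>
definition conj_class :: "'g set \<Rightarrow> ('g \<Rightarrow> 'g \<Rightarrow> 'g) \<Rightarrow> 'g \<Rightarrow> 'g set" where
  "conj_class G m x = {y \<in> G. \<exists>g\<in>G. m g y = m x g}"

definition cg_walk :: "('g \<Rightarrow> 'g \<Rightarrow> 'g) \<Rightarrow> 'g set \<Rightarrow> 'g \<Rightarrow> 'g \<Rightarrow> nat \<Rightarrow> bool" where
  "cg_walk m X x y n \<longleftrightarrow> (\<exists>xs. length xs = Suc n \<and> set xs \<subseteq> X \<and> hd xs = x \<and> last xs = y \<and>
      (\<forall>i<n. m (xs ! i) (xs ! Suc i) = m (xs ! Suc i) (xs ! i)))"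

definition cg_dist :: "('g \<Rightarrow> 'g \<Rightarrow> 'g) \<Rightarrow> 'g set \<Rightarrow> 'g \<Rightarrow> 'g \<Rightarrow> enat" where
  "cg_dist m X x y = (INF n\<in>{n. cg_walk m X x y n}. enat n)"

definition cg_connected :: "('g \<Rightarrow> 'g \<Rightarrow> 'g) \<Rightarrow> 'g set \<Rightarrow> bool" where
  "cg_connected m X \<longleftrightarrow> (\<forall>x\<in>X. \<forall>y\<in>X. cg_dist m X x y \<noteq> \<infinity>)"

definition cg_diameter :: "('g \<Rightarrow> 'g \<Rightarrow> 'g) \<Rightarrow> 'g set \<Rightarrow> enat" where
  "cg_diameter m X = (SUP x\<in>X. SUP y\<in>X. cg_dist m X x y)"

end

theory Submission
  imports Defs
begin


lemma refl_linear: "linear (refl \<alpha>)"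
proof (rule linearI)
  fix x y :: 'a and c :: real
  have e1: "(2 * ((x + y) \<bullet> \<alpha>)) / (\<alpha> \<bullet> \<alpha>) = (2 * (x \<bullet> \<alpha>)) / (\<alpha> \<bullet> \<alpha>) + (2 * (y \<bullet> \<alpha>)) / (\<alpha> \<bullet> \<alpha>)"
    by (simp only: inner_add_left distrib_left add_divide_distrib)
  show "refl \<alpha> (x + y) = refl \<alpha> x + refl \<alpha> y"
    unfolding refl_def e1 scaleR_add_left by simp
  have e2: "(2 * ((c *\<^sub>R x) \<bullet> \<alpha>)) / (\<alpha> \<bullet> \<alpha>) = c * ((2 * (x \<bullet> \<alpha>)) / (\<alpha> \<bullet> \<alpha>))"
    by simp
  show "refl \<alpha> (c *\<^sub>R x) = c *\<^sub>R refl \<alpha> x"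
    unfolding refl_def e2 by (simp add: scaleR_right_diff_distrib)
qed

lemma refl_refl: assumes "\<alpha> \<noteq> 0" shows "refl \<alpha> (refl \<alpha> v) = v"
proof -
  define c where "c = (2 * (v \<bullet> \<alpha>)) / (\<alpha> \<bullet> \<alpha>)"
  have aa: "\<alpha> \<bullet> \<alpha> \<noteq> 0" using assms by simp
  have r: "refl \<alpha> v = v - c *\<^sub>R \<alpha>" unfolding refl_def c_def ..
  have "(v - c *\<^sub>R \<alpha>) \<bullet> \<alpha> = v \<bullet> \<alpha> - c * (\<alpha> \<bullet> \<alpha>)" by (simp add: inner_diff_left)
  also have "c * (\<alpha> \<bullet> \<alpha>) = 2 * (v \<bullet> \<alpha>)" unfolding c_def using aa by simp
  finally have "(2 * ((v - c *\<^sub>R \<alpha>) \<bullet> \<alpha>)) / (\<alpha> \<bullet> \<alpha>) = - c" unfolding c_def by (simp add: divide_simps)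
  then show ?thesis unfolding r by (simp add: refl_def)
qed

lemma refl_inner: "\<alpha> \<noteq> 0 \<Longrightarrow> refl \<alpha> v \<bullet> refl \<alpha> v = v \<bullet> v"
  unfolding refl_def by (simp add: inner_diff_left inner_diff_right inner_commute algebra_simps power2_eq_square)

lemma refl_coroot: "\<alpha> \<noteq> 0 \<Longrightarrow> refl \<alpha> (coroot \<beta>) = coroot (refl \<alpha> \<beta>)"
  unfolding coroot_def by (simp add: refl_inner linear_cmul[OF refl_linear])

lemma weyl_linear: "s \<in> weyl_group \<Phi> \<Longrightarrow> linear s"
proof (induction rule: weyl_group.induct)
  case id
  show ?case by (rule linearI) auto
next
  case (step s \<alpha>)
  show ?case by (rule linear_compose[OF step.IH refl_linear])
qed

lemma weyl_comp: "s \<in> weyl_group \<Phi> \<Longrightarrow> t \<in> weyl_group \<Phi> \<Longrightarrow> s \<circ> t \<in> weyl_group \<Phi>"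
proof (induction rule: weyl_group.induct)
  case id
  then show ?case by simp
next
  case (step s \<alpha>)
  then show ?case by (metis comp_assoc weyl_group.step)
qed

lemma weyl_refl: assumes "\<alpha> \<in> \<Phi>" shows "refl \<alpha> \<in> weyl_group \<Phi>"
proof -
  have "refl \<alpha> \<circ> id \<in> weyl_group \<Phi>" by (rule weyl_group.step[OF weyl_group.id]) (rule assms)
  then show ?thesis by (simp only: comp_id)
qed

lemma weyl_inv: assumes R: "root_system \<Phi>" shows "s \<in> weyl_group \<Phi> \<Longrightarrow> \<exists>t\<in>weyl_group \<Phi>. t \<circ> s = id \<and> s \<circ> t = id"
proof (induction rule: weyl_group.induct)
  case id
  show ?case
  proof (rule bexI[of _ id])
    show "id \<in> weyl_group \<Phi>" by (rule weyl_group.id)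
  qed simp
next
  case (step s \<alpha>)
  then obtain t where t: "t \<in> weyl_group \<Phi>" "t \<circ> s = id" "s \<circ> t = id" by blast
  have a0: "\<alpha> \<noteq> 0" using step R root_system_def by metis
  have rr: "refl \<alpha> \<circ> refl \<alpha> = id" using refl_refl[OF a0] by (auto simp: fun_eq_iff)
  have "t \<circ> refl \<alpha> \<in> weyl_group \<Phi>" using weyl_comp[OF t(1) weyl_refl[OF step(2)]] .
  moreover have "(t \<circ> refl \<alpha>) \<circ> (refl \<alpha> \<circ> s) = id"
    by (metis o_assoc rr t(2) id_o)
  moreover have "(refl \<alpha> \<circ> s) \<circ> (t \<circ> refl \<alpha>) = id"
    by (metis o_assoc rr t(3) id_o)
  ultimately show ?case by blast
qed

lemma lattice_0: "0 \<in> coroot_lattice \<Phi>"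
  unfolding coroot_lattice_def by (rule CollectI, rule exI[of _ "\<lambda>_. 0"]) simp

lemma lattice_add: "u \<in> coroot_lattice \<Phi> \<Longrightarrow> v \<in> coroot_lattice \<Phi> \<Longrightarrow> u + v \<in> coroot_lattice \<Phi>"
  unfolding coroot_lattice_def
proof safe
  fix c d :: "'a \<Rightarrow> int"
  show "\<exists>e. (\<Sum>\<alpha>\<in>\<Phi>. real_of_int (c \<alpha>) *\<^sub>R coroot \<alpha>) + (\<Sum>\<alpha>\<in>\<Phi>. real_of_int (d \<alpha>) *\<^sub>R coroot \<alpha>) =
        (\<Sum>\<alpha>\<in>\<Phi>. real_of_int (e \<alpha>) *\<^sub>R coroot \<alpha>)"
    by (rule exI[of _ "\<lambda>x. c x + d x"]) (simp add: sum.distrib[symmetric] scaleR_add_left)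
qed

lemma lattice_neg: "u \<in> coroot_lattice \<Phi> \<Longrightarrow> - u \<in> coroot_lattice \<Phi>"
  unfolding coroot_lattice_def
proof safe
  fix c :: "'a \<Rightarrow> int"
  show "\<exists>e. - (\<Sum>\<alpha>\<in>\<Phi>. real_of_int (c \<alpha>) *\<^sub>R coroot \<alpha>) =
        (\<Sum>\<alpha>\<in>\<Phi>. real_of_int (e \<alpha>) *\<^sub>R coroot \<alpha>)"
    by (rule exI[of _ "\<lambda>x. - c x"]) (simp add: sum_negf[symmetric])
qed

lemma refl_lattice:
  assumes R: "root_system \<Phi>" and a: "\<alpha> \<in> \<Phi>" and u: "u \<in> coroot_lattice \<Phi>"
  shows "refl \<alpha> u \<in> coroot_lattice \<Phi>"
proof -
  have a0: "\<alpha> \<noteq> 0" using R a root_system_def by metis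
  obtain c where c: "u = (\<Sum>\<beta>\<in>\<Phi>. of_int (c \<beta>) *\<^sub>R coroot \<beta>)" using u coroot_lattice_def by blast
  have into: "\<And>\<beta>. \<beta> \<in> \<Phi> \<Longrightarrow> refl \<alpha> \<beta> \<in> \<Phi>" using R a root_system_def by metis
  have bij: "bij_betw (refl \<alpha>) \<Phi> \<Phi>"
    by (rule bij_betw_byWitness[where f'="refl \<alpha>"]) (auto simp: refl_refl[OF a0] into)
  have "refl \<alpha> u = (\<Sum>\<beta>\<in>\<Phi>. of_int (c \<beta>) *\<^sub>R coroot (refl \<alpha> \<beta>))"
    unfolding c by (simp add: linear_sum[OF refl_linear] linear_cmul[OF refl_linear] refl_coroot[OF a0])
  also have "\<dots> = (\<Sum>\<beta>\<in>\<Phi>. (\<lambda>\<gamma>. of_int (c (refl \<alpha> \<gamma>)) *\<^sub>R coroot \<gamma>) (refl \<alpha> \<beta>))"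
    by (simp add: refl_refl[OF a0])
  also have "\<dots> = (\<Sum>\<gamma>\<in>\<Phi>. of_int (c (refl \<alpha> \<gamma>)) *\<^sub>R coroot \<gamma>)"
    by (rule sum.reindex_bij_betw[OF bij])
  finally show ?thesis unfolding coroot_lattice_def mem_Collect_eq by (rule exI[of _ "\<lambda>\<gamma>. c (refl \<alpha> \<gamma>)"])
qed

lemma weyl_lattice: assumes R: "root_system \<Phi>" shows "s \<in> weyl_group \<Phi> \<Longrightarrow> u \<in> coroot_lattice \<Phi> \<Longrightarrow> s u \<in> coroot_lattice \<Phi>"
proof (induction arbitrary: u rule: weyl_group.induct)
  case id
  then show ?case by simp
next
  case (step s \<alpha>)
  then show ?case using refl_lattice[OF R] by simp
qed



lemma walk_map:
  assumes w: "cg_walk m X x y n" and fX: "\<forall>z\<in>X. f z \<in> Y"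
    and fc: "\<forall>z1\<in>X. \<forall>z2\<in>X. m z1 z2 = m z2 z1 \<longrightarrow> m' (f z1) (f z2) = m' (f z2) (f z1)"
  shows "cg_walk m' Y (f x) (f y) n"
proof -
  obtain xs where xs: "length xs = Suc n" "set xs \<subseteq> X" "hd xs = x" "last xs = y"
    "\<forall>i<n. m (xs ! i) (xs ! Suc i) = m (xs ! Suc i) (xs ! i)"
    using w unfolding cg_walk_def by blast
  have ne: "xs \<noteq> []" using xs(1) by auto
  show ?thesis unfolding cg_walk_def
  proof (intro exI[of _ "map f xs"] conjI allI impI)
    show "length (map f xs) = Suc n" using xs by simp
    show "set (map f xs) \<subseteq> Y" using xs(2) fX by auto
    show "hd (map f xs) = f x" using ne xs(3) by (simp add: hd_map)
    show "last (map f xs) = f y" using ne xs(4) by (simp add: last_map)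
    fix i assume i: "i < n"
    have "xs ! i \<in> X" "xs ! Suc i \<in> X" using i xs(1,2) nth_mem by (auto intro!: subsetD[OF xs(2)] nth_mem)
    then show "m' (map f xs ! i) (map f xs ! Suc i) = m' (map f xs ! Suc i) (map f xs ! i)"
      using fc xs(5) i xs(1) by auto
  qed
qed

lemma walk_concat:
  assumes w1: "cg_walk m X x y n1" and w2: "cg_walk m X y z n2"
  shows "cg_walk m X x z (n1 + n2)"
proof -
  obtain xs where xs: "length xs = Suc n1" "set xs \<subseteq> X" "hd xs = x" "last xs = y"
    "\<forall>i<n1. m (xs ! i) (xs ! Suc i) = m (xs ! Suc i) (xs ! i)"
    using w1 unfolding cg_walk_def by blast
  obtain ys where ys: "length ys = Suc n2" "set ys \<subseteq> X" "hd ys = y" "last ys = z"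
    "\<forall>i<n2. m (ys ! i) (ys ! Suc i) = m (ys ! Suc i) (ys ! i)"
    using w2 unfolding cg_walk_def by blast
  define zs where "zs = xs @ tl ys"
  have ne: "xs \<noteq> []" "ys \<noteq> []" using xs(1) ys(1) by auto
  have lenz: "length zs = Suc (n1 + n2)" using xs(1) ys(1) by (simp add: zs_def)
  have low: "zs ! i = xs ! i" if "i \<le> n1" for i using that xs(1) by (simp add: zs_def nth_append)
  have high: "zs ! i = ys ! (i - n1)" if "n1 \<le> i" "i \<le> n1 + n2" for i
  proof (cases "i = n1")
    case True
    have "xs ! n1 = y" using xs(1,4) ne by (simp add: last_conv_nth)
    moreover have "ys ! 0 = y" using ys(3) ne by (simp add: hd_conv_nth)
    ultimately show ?thesis using True low by simp
  next
    case False
    then have "zs ! i = tl ys ! (i - Suc n1)" using that xs(1) by (simp add: zs_def nth_append)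
    also have "\<dots> = ys ! (i - n1)" using that False ys(1) by (simp add: nth_tl Suc_diff_Suc)
    finally show ?thesis .
  qed
  show ?thesis unfolding cg_walk_def
  proof (intro exI[of _ zs] conjI allI impI)
    show "length zs = Suc (n1 + n2)" by (rule lenz)
    show "set zs \<subseteq> X" using xs(2) ys(2) by (auto simp: zs_def dest: list.set_sel(2)[OF ne(2)])
    show "hd zs = x" using ne xs(3) by (simp add: zs_def)
    show "last zs = z"
    proof (cases n2)
      case 0
      then have "tl ys = []" using ys(1) by (cases ys) auto
      moreover have "y = z" using ys(1,3,4) 0 by (cases ys) auto
      ultimately show ?thesis using xs(4) by (simp add: zs_def)
    next
      case (Suc n)
      then have "tl ys \<noteq> []" using ys(1) by (cases ys) auto
      then show ?thesis using ys(4) by (simp add: zs_def last_tl)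
    qed
    fix i assume i: "i < n1 + n2"
    show "m (zs ! i) (zs ! Suc i) = m (zs ! Suc i) (zs ! i)"
    proof (cases "i < n1")
      case True
      then show ?thesis using low[of i] low[of "Suc i"] xs(5) by simp
    next
      case False
      then have "zs ! i = ys ! (i - n1)" "zs ! Suc i = ys ! Suc (i - n1)"
        using high[of i] high[of "Suc i"] i by (auto simp: Suc_diff_le)
      then show ?thesis using ys(5) i False by simp
    qed
  qed
qed

lemma walk_end: "cg_walk m X x y n \<Longrightarrow> y \<in> X"
  unfolding cg_walk_def by (metis last_in_set list.size(3) nat.distinct(1) subsetD)

lemma dist_le_walk: "cg_walk m X x y n \<Longrightarrow> cg_dist m X x y \<le> enat n"
  unfolding cg_dist_def by (rule INF_lower) simp

lemma dist_walk: assumes "cg_dist m X x y \<le> enat k" shows "\<exists>n\<le>k. cg_walk m X x y n"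
proof (rule ccontr)
  assume "\<not> ?thesis"
  then have "\<forall>n. cg_walk m X x y n \<longrightarrow> Suc k \<le> n" by (meson not_less_eq_eq)
  then have "enat (Suc k) \<le> cg_dist m X x y" unfolding cg_dist_def by (auto intro!: INF_greatest)
  from order_trans[OF this assms] show False by simp
qed

lemma diam_dist: assumes "cg_diameter m X = D" "x \<in> X" "y \<in> X" shows "cg_dist m X x y \<le> D"
proof -
  have "cg_dist m X x y \<le> (SUP y\<in>X. cg_dist m X x y)" by (rule SUP_upper) fact
  also have "\<dots> \<le> cg_diameter m X" unfolding cg_diameter_def
    by (rule SUP_upper[of x X "\<lambda>x. SUP y\<in>X. cg_dist m X x y"]) fact
  finally show ?thesis using assms by simp
qed



lemma amult_assoc: "linear (fst z) \<Longrightarrow> amult (amult x y) z = amult x (amult y z)"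
  unfolding amult_def wmult_def by (simp add: linear_add o_assoc)

lemma aff_lin: "x \<in> aff_weyl \<Phi> \<Longrightarrow> linear (fst x)"
  unfolding aff_weyl_def by (auto intro: weyl_linear)

lemma aff_closed:
  assumes R: "root_system \<Phi>" and x: "x \<in> aff_weyl \<Phi>" and y: "y \<in> aff_weyl \<Phi>"
  shows "amult x y \<in> aff_weyl \<Phi>"
proof -
  have "fst y \<circ> fst x \<in> weyl_group \<Phi>" using x y unfolding aff_weyl_def
    by (auto intro: weyl_comp)
  moreover have "fst y (snd x) \<in> coroot_lattice \<Phi>" using x y weyl_lattice[OF R, of "fst y" "snd x"]
    unfolding aff_weyl_def by auto
  then have "fst y (snd x) + snd y \<in> coroot_lattice \<Phi>" using y lattice_add unfolding aff_weyl_def by auto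
  ultimately show ?thesis unfolding aff_weyl_def amult_def wmult_def by (simp add: mem_Times_iff)
qed

lemma aff_e: "(id, 0) \<in> aff_weyl \<Phi>"
  unfolding aff_weyl_def using weyl_group.id lattice_0 by auto

lemma amult_e_left: "linear (fst x) \<Longrightarrow> amult (id, 0) x = x"
  unfolding amult_def wmult_def by (simp add: linear_0)

lemma amult_e_right: "amult x (id, 0) = x"
  unfolding amult_def wmult_def by simp

lemma aff_inv:
  assumes R: "root_system \<Phi>" and x: "x \<in> aff_weyl \<Phi>"
  shows "\<exists>h\<in>aff_weyl \<Phi>. amult x h = (id, 0) \<and> amult h x = (id, 0)"
proof -
  obtain s u where xsu: "x = (s, u)" "s \<in> weyl_group \<Phi>" "u \<in> coroot_lattice \<Phi>"
    using x unfolding aff_weyl_def by auto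
  obtain t where t: "t \<in> weyl_group \<Phi>" "t \<circ> s = id" "s \<circ> t = id" using weyl_inv[OF R xsu(2)] by blast
  have ls: "linear s" using weyl_linear xsu(2) by blast
  have stu: "s (t u) = u" using t(3) by (metis comp_apply id_apply)
  have h: "(t, - t u) \<in> aff_weyl \<Phi>" unfolding aff_weyl_def
    using t(1) weyl_lattice[OF R t(1) xsu(3)] lattice_neg by auto
  moreover have "amult x (t, - t u) = (id, 0)" using t xsu(1) by (simp add: amult_def wmult_def)
  moreover have "amult (t, - t u) x = (id, 0)" using t xsu(1) stu
    by (simp add: amult_def wmult_def linear_neg[OF ls])
  ultimately show ?thesis by blast
qed

lemma cancel:
  assumes "linear (fst w)" "amult g h = (id, 0)"
  shows "amult g (amult h w) = w"
  using amult_assoc[OF assms(1), of g h] assms by (simp add: amult_e_left)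

locale setting =
  fixes \<Phi> :: "'v::euclidean_space set" and a :: "'v \<Rightarrow> 'v" and X Xh
  assumes R: "root_system \<Phi>" and aW: "a \<in> weyl_group \<Phi>"
    and X: "X = conj_class (aff_weyl \<Phi>) amult (a, 0)"
    and Xh: "Xh = conj_class (weyl_group \<Phi>) wmult a"
begin

lemma X_aff: "z \<in> X \<Longrightarrow> z \<in> aff_weyl \<Phi>" unfolding X conj_class_def by auto

lemma conj_hom:
  assumes p: "p \<in> aff_weyl \<Phi>" and q: "q \<in> aff_weyl \<Phi>" and qp: "amult q p = (id, 0)"
    and z1: "z1 \<in> aff_weyl \<Phi>" and z2: "z2 \<in> aff_weyl \<Phi>"
  shows "amult (amult (amult p z1) q) (amult (amult p z2) q) = amult (amult p (amult z1 z2)) q"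
proof -
  have l: "linear (fst q)" "linear (fst z2)" "linear (fst (amult z2 q))" "linear (fst (amult (amult p z2) q))"
    "linear (fst (amult z1 z2))"
    using aff_lin q z2 z1 p aff_closed[OF R] by blast+
  have "amult (amult (amult p z1) q) (amult (amult p z2) q) = amult (amult p z1) (amult q (amult (amult p z2) q))"
    using amult_assoc[OF l(4)] by simp
  also have "amult q (amult (amult p z2) q) = amult z2 q"
    using amult_assoc[OF l(1), of p z2] cancel[OF l(3) qp] by simp
  also have "amult (amult p z1) (amult z2 q) = amult p (amult z1 (amult z2 q))"
    using amult_assoc[OF l(3)] by simp
  also have "\<dots> = amult p (amult (amult z1 z2) q)"
    using amult_assoc[OF l(1)] by simp
  also have "\<dots> = amult (amult p (amult z1 z2)) q"
    using amult_assoc[OF l(1)] by simp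
  finally show ?thesis .
qed

lemma conj_X:
  assumes p: "p \<in> aff_weyl \<Phi>" and q: "q \<in> aff_weyl \<Phi>" and qp: "amult q p = (id, 0)"
    and x: "x \<in> X"
  shows "amult (amult p x) q \<in> X"
proof -
  have xa: "x \<in> aff_weyl \<Phi>" using x X_aff by blast
  obtain f where f: "f \<in> aff_weyl \<Phi>" "amult f x = amult (a, 0) f" using x unfolding X conj_class_def by blast
  have l: "linear (fst q)" "linear (fst (amult x q))" "linear (fst (amult (amult p x) q))"
    using aff_lin q xa p aff_closed[OF R] by blast+
  have "amult (amult f q) (amult (amult p x) q) = amult f (amult q (amult (amult p x) q))"
    using amult_assoc[OF l(3)] by simp
  also have "amult q (amult (amult p x) q) = amult x q"
    using amult_assoc[OF l(1), of p x] cancel[OF l(2) qp] by simp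
  also have "amult f (amult x q) = amult (amult f x) q" using amult_assoc[OF l(1)] by simp
  also have "\<dots> = amult (amult (a, 0) f) q" using f(2) by simp
  also have "\<dots> = amult (a, 0) (amult f q)" using amult_assoc[OF l(1)] by simp
  finally have "amult (amult f q) (amult (amult p x) q) = amult (a, 0) (amult f q)" .
  moreover have "amult f q \<in> aff_weyl \<Phi>" "amult (amult p x) q \<in> aff_weyl \<Phi>"
    using aff_closed[OF R] f p q xa by blast+
  ultimately show ?thesis unfolding X conj_class_def by blast
qed

lemma walk_conj:
  assumes p: "p \<in> aff_weyl \<Phi>" and q: "q \<in> aff_weyl \<Phi>" and qp: "amult q p = (id, 0)"
    and w: "cg_walk amult X x y n"
  shows "cg_walk amult X (amult (amult p x) q) (amult (amult p y) q) n"
  using w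
proof (rule walk_map)
  show "\<forall>z\<in>X. amult (amult p z) q \<in> X" using conj_X[OF p q qp] by blast
  show "\<forall>z1\<in>X. \<forall>z2\<in>X. amult z1 z2 = amult z2 z1 \<longrightarrow>
     amult (amult (amult p z1) q) (amult (amult p z2) q) = amult (amult (amult p z2) q) (amult (amult p z1) q)"
  proof (intro ballI impI)
    fix z1 z2 assume z: "z1 \<in> X" "z2 \<in> X" "amult z1 z2 = amult z2 z1"
    have "amult (amult (amult p z1) q) (amult (amult p z2) q) = amult (amult p (amult z1 z2)) q"
      using conj_hom[OF p q qp] X_aff z(1,2) by blast
    also have "\<dots> = amult (amult p (amult z2 z1)) q" using z(3) by simp
    also have "\<dots> = amult (amult (amult p z2) q) (amult (amult p z1) q)"
      using conj_hom[OF p q qp] X_aff z(1,2) by metis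
    finally show "amult (amult (amult p z1) q) (amult (amult p z2) q) = amult (amult (amult p z2) q) (amult (amult p z1) q)" .
  qed
qed

lemma conj_back:
  assumes p: "p \<in> aff_weyl \<Phi>" and q: "q \<in> aff_weyl \<Phi>" and qp: "amult q p = (id, 0)"
    and pq: "amult p q = (id, 0)" and z: "z \<in> aff_weyl \<Phi>"
  shows "amult (amult q (amult (amult p z) q)) p = z"
proof -
  have l: "linear (fst q)" "linear (fst p)" "linear (fst (amult z q))" "linear (fst z)"
    using aff_lin q z p aff_closed[OF R] by blast+
  have "amult q (amult (amult p z) q) = amult z q"
    using amult_assoc[OF l(1), of p z] cancel[OF l(3) qp] by simp
  then show ?thesis using amult_assoc[OF l(2), of z q] qp amult_e_right by simp
qed

lemma fst_X: assumes z: "z \<in> X" shows "fst z \<in> Xh"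
proof -
  obtain f where f: "f \<in> aff_weyl \<Phi>" "amult f z = amult (a, 0) f" and za: "z \<in> aff_weyl \<Phi>"
    using z unfolding X conj_class_def by blast
  have "wmult (fst f) (fst z) = wmult a (fst f)" using arg_cong[OF f(2), of fst] by (simp add: amult_def)
  moreover have "fst f \<in> weyl_group \<Phi>" "fst z \<in> weyl_group \<Phi>"
    using f(1) za unfolding aff_weyl_def by (auto simp: mem_Times_iff)
  ultimately show ?thesis unfolding Xh conj_class_def by blast
qed

lemma Xh_X: assumes c: "c \<in> Xh" shows "(c, 0) \<in> X"
proof -
  obtain s where s: "s \<in> weyl_group \<Phi>" "wmult s c = wmult a s" and cW: "c \<in> weyl_group \<Phi>"
    using c unfolding Xh conj_class_def by blast
  have "amult (s, 0) (c, 0) = amult (a, 0) (s, 0)"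
    using s weyl_linear[OF s(1)] weyl_linear[OF cW] by (simp add: amult_def linear_0)
  moreover have "(s, 0) \<in> aff_weyl \<Phi>" "(c, 0) \<in> aff_weyl \<Phi>"
    using s cW lattice_0 unfolding aff_weyl_def by auto
  ultimately show ?thesis unfolding X conj_class_def by blast
qed

lemma walk_lift: assumes "cg_walk wmult Xh x y n" shows "cg_walk amult X (x, 0) (y, 0) n"
  using assms
proof (rule walk_map)
  show "\<forall>z\<in>Xh. (z, 0) \<in> X" using Xh_X by blast
  show "\<forall>z1\<in>Xh. \<forall>z2\<in>Xh. wmult z1 z2 = wmult z2 z1 \<longrightarrow> amult (z1, 0) (z2, 0) = amult (z2, 0) (z1, 0)"
  proof (intro ballI impI)
    fix z1 z2 assume "z1 \<in> Xh" "z2 \<in> Xh" "wmult z1 z2 = wmult z2 z1"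
    moreover have "linear z1" "linear z2" using \<open>z1 \<in> Xh\<close> \<open>z2 \<in> Xh\<close> weyl_linear unfolding Xh conj_class_def by auto
    ultimately show "amult (z1, 0) (z2, 0) = amult (z2, 0) (z1, 0)" by (simp add: amult_def linear_0)
  qed
qed

end


theorem proposition2p7:
  fixes \<Phi> :: "'v::euclidean_space set"
    and a :: "'v \<Rightarrow> 'v" and d k :: nat
  assumes "root_system \<Phi>"
    and "involution (weyl_group \<Phi>) wmult id a"
    and "X = conj_class (aff_weyl \<Phi>) amult (a, 0)"
    and "Xh = conj_class (weyl_group \<Phi>) wmult a"
    and "cg_connected wmult Xh" and "cg_diameter wmult Xh = enat d"
    and "\<forall>u. (a, u) \<in> X \<longrightarrow> (\<exists>xh\<in>Xh. cg_dist amult X (a, u) (xh, 0) \<le> enat k)"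
  shows "cg_connected amult X \<and> cg_diameter amult X \<le> enat (d + k)"
proof -
  note R = assms(1)
  have aW: "a \<in> weyl_group \<Phi>" using assms(2) unfolding involution_def by blast
  interpret S: setting \<Phi> a X Xh using R aW assms(3,4) by unfold_locales
  have "wmult id a = wmult a id" by (simp add: wmult_def)
  then have aXh: "a \<in> Xh" unfolding assms(4) conj_class_def using aW weyl_group.id by blast
  have key: "cg_dist amult X x y \<le> enat (d + k)" if x: "x \<in> X" and y: "y \<in> X" for x y
  proof -
    obtain g where g: "g \<in> aff_weyl \<Phi>" "amult g y = amult (a, 0) g"
      using y unfolding assms(3) conj_class_def by blast
    obtain h where h: "h \<in> aff_weyl \<Phi>" "amult g h = (id, 0)" "amult h g = (id, 0)"
      using aff_inv[OF R g(1)] by blast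
    have lh: "linear (fst h)" using aff_lin h(1) by blast
    have xa: "x \<in> aff_weyl \<Phi>" "y \<in> aff_weyl \<Phi>" using x y S.X_aff by auto
    define x' where "x' = amult (amult g x) h"
    have x'X: "x' \<in> X" using S.conj_X[OF g(1) h(1) h(3) x] x'_def by simp
    have x'a: "x' \<in> aff_weyl \<Phi>" using x'X S.X_aff by blast
    have yback: "amult (amult g y) h = (a, 0)"
      using g(2) amult_assoc[OF lh, of "(a,0)" g] h(2) amult_e_right by simp
    obtain b u where bu: "x' = (b, u)" by (cases x')
    have bXh: "b \<in> Xh" using S.fst_X[OF x'X] bu by simp
    obtain s where s: "s \<in> weyl_group \<Phi>" "wmult s b = wmult a s"
      using bXh unfolding assms(4) conj_class_def by blast
    obtain t where t: "t \<in> weyl_group \<Phi>" "t \<circ> s = id" "s \<circ> t = id" using weyl_inv[OF R s(1)] by blast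
    have ls: "linear s" and lt: "linear t" using s(1) t(1) weyl_linear by blast+
    have lb: "linear b" using bXh weyl_linear unfolding assms(4) conj_class_def by blast
    have sA: "(s, 0) \<in> aff_weyl \<Phi>" "(t, 0) \<in> aff_weyl \<Phi>"
      using s(1) t(1) lattice_0 unfolding aff_weyl_def by auto
    have ts: "amult (t, 0) (s, 0) = (id, 0)" using t(3) by (simp add: amult_def wmult_def linear_0[OF ls])
    have st: "amult (s, 0) (t, 0) = (id, 0)" using t(2) by (simp add: amult_def wmult_def linear_0[OF lt])
    have bs: "b \<circ> s = s \<circ> a" using s(2) by (simp add: wmult_def)
    have tbs: "t \<circ> (b \<circ> s) = a" unfolding bs by (simp add: o_assoc t(2))
    have x'': "amult (amult (s, 0) x') (t, 0) = (a, t u)"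
      unfolding bu by (simp add: amult_def wmult_def linear_0[OF lb] tbs)
    have x''X: "(a, t u) \<in> X" using S.conj_X[OF sA(1) sA(2) ts x'X] x'' by simp
    obtain xh where xh: "xh \<in> Xh" "cg_dist amult X (a, t u) (xh, 0) \<le> enat k"
      using assms(7) x''X by blast
    obtain n1 where n1: "n1 \<le> k" "cg_walk amult X (a, t u) (xh, 0) n1" using dist_walk[OF xh(2)] by blast
    have lxh: "linear xh" using xh(1) weyl_linear unfolding assms(4) conj_class_def by blast
    define c0 where "c0 = amult (amult (t, 0) (xh, 0)) (s, 0)"
    have w1: "cg_walk amult X (amult (amult (t, 0) (a, t u)) (s, 0)) c0 n1"
      unfolding c0_def by (rule S.walk_conj[OF sA(2) sA(1) st n1(2)])
    have "amult (amult (t, 0) (a, t u)) (s, 0) = x'"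
      unfolding x''[symmetric] by (rule S.conj_back[OF sA(1) sA(2) ts st x'a])
    with w1 have w1': "cg_walk amult X x' c0 n1" by simp
    have c0X: "c0 \<in> X" using walk_end[OF w1'] .
    have c0s: "c0 = (fst c0, 0)"
      unfolding c0_def by (simp add: amult_def linear_0[OF lxh] linear_0[OF ls])
    have c0Xh: "fst c0 \<in> Xh" using S.fst_X[OF c0X] .
    have "cg_dist wmult Xh (fst c0) a \<le> enat d" by (rule diam_dist[OF assms(6) c0Xh aXh])
    then obtain n2 where n2: "n2 \<le> d" "cg_walk wmult Xh (fst c0) a n2" using dist_walk[of wmult Xh "fst c0" a d] by blast
    have "cg_walk amult X (fst c0, 0) (a, 0) n2" by (rule S.walk_lift[OF n2(2)])
    then have w2: "cg_walk amult X c0 (a, 0) n2" by (simp only: c0s[symmetric])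
    have w: "cg_walk amult X x' (a, 0) (n1 + n2)" by (rule walk_concat[OF w1' w2])
    have w': "cg_walk amult X (amult (amult h x') g) (amult (amult h (a, 0)) g) (n1 + n2)"
      by (rule S.walk_conj[OF h(1) g(1) h(2) w])
    have ex: "amult (amult h x') g = x" unfolding x'_def by (rule S.conj_back[OF g(1) h(1) h(3) h(2) xa(1)])
    have ey: "amult (amult h (a, 0)) g = y" unfolding yback[symmetric] by (rule S.conj_back[OF g(1) h(1) h(3) h(2) xa(2)])
    have "cg_walk amult X x y (n1 + n2)" using w' unfolding ex ey .
    then have "cg_dist amult X x y \<le> enat (n1 + n2)" by (rule dist_le_walk)
    also have "\<dots> \<le> enat (d + k)" using n1(1) n2(1) by simp
    finally show ?thesis .
  qed
  show ?thesis
  proof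
    show "cg_connected amult X" unfolding cg_connected_def
    proof (intro ballI)
      fix x y assume "x \<in> X" "y \<in> X"
      then have le: "cg_dist amult X x y \<le> enat (d + k)" by (rule key)
      show "cg_dist amult X x y \<noteq> \<infinity>"
      proof
        assume eq: "cg_dist amult X x y = \<infinity>"
        from le show False unfolding eq by simp
      qed
    qed
    show "cg_diameter amult X \<le> enat (d + k)" unfolding cg_diameter_def
      using key by (intro SUP_least) auto
  qed
qed

end
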